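(* Let $(X,\|\cdot\|)$ be a Banach space, $K\subset X$ a cone, $U$ a relatively open subset of $K$, and $T:\overline{U}\to K$ an operator (not necessarily continuous). Let $\mathbb{T}:\overline{U}\to 2^K$ be the closed--convex envelope of $T$. Then: 1. If $T$ maps bounded sets into relatively compact sets, then $\mathbb{T}$ has compact values and is upper semicontinuous. 2. If $T(\overline{U})$ is relatively compact, then $\mathbb{T}(\overline{U})=\bigcup_{x\in\overline U}\mathbb T x$ is relatively compact.
   Context: A cone in a Banach space $X$ is a closed convex set $K$ such that $\lambda x\in K$ for all $x\in K$, $\lambda\ge 0$, and such that $x\in K$, $-x\in K$ imply $x=0$. The closed--convex envelope of $T:\overline{U}\to K$ is the multivalued map $\mathbb{T}:\overline U\to 2^K$ given by $\mathbb{T}x=\bigcap_{\varepsilon>0}\overline{\mathrm{co}}\,T\big(\overline{B}_\varepsilon(x)\cap\overline{U}\big)$, where $\overline B_\varepsilon(x)$ is the closed ball of center $x$ and radius $\varepsilon$ and $\overline{\mathrm{co}}$ denotes the closed convex hull. *)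

theory Defs
  imports "HOL-Analysis.Analysis"
begin

definition is_cone :: "'a::real_normed_vector set \<Rightarrow> bool" where
  "is_cone K \<longleftrightarrow> closed K \<and> convex K \<and> (\<forall>x\<in>K. \<forall>c::real. c \<ge> 0 \<longrightarrow> c *\<^sub>R x \<in> K)
     \<and> (\<forall>x. x \<in> K \<and> -x \<in> K \<longrightarrow> x = 0)"

definition cc_envelope :: "('a::real_normed_vector \<Rightarrow> 'a) \<Rightarrow> 'a set \<Rightarrow> 'a \<Rightarrow> 'a set" where
  "cc_envelope T D x = (\<Inter>\<epsilon>\<in>{\<epsilon>::real. \<epsilon> > 0}. closure (convex hull (T ` (cball x \<epsilon> \<inter> D))))"

definition usc_on :: "'a::metric_space set \<Rightarrow> ('a \<Rightarrow> 'b::topological_space set) \<Rightarrow> bool" where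
  "usc_on D F \<longleftrightarrow> (\<forall>x\<in>D. \<forall>V. open V \<and> F x \<subseteq> V \<longrightarrow>
       (\<exists>\<delta>>0. \<forall>y\<in>D. dist y x < \<delta> \<longrightarrow> F y \<subseteq> V))"

definition rel_compact :: "'a::topological_space set \<Rightarrow> bool" where
  "rel_compact S \<longleftrightarrow> compact (closure S)"

end

theory Submission imports Defs begin

lemma mazur:
  fixes S :: "'a::banach set"
  assumes cS: "compact (closure S)"
  shows "compact (closure (convex hull S))"
  unfolding compact_eq_totally_bounded
proof (intro conjI allI impI)
  show "complete (closure (convex hull S))" by (simp add: complete_eq_closed)
  fix e :: real assume e: "e > 0"
  have e3: "e/3 > 0" using e by simp
  obtain k where k: "finite k" "closure S \<subseteq> (\<Union>x\<in>k. ball x (e/3))"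
    using cS[unfolded compact_eq_totally_bounded] e3 by blast
  define C where "C = convex hull k"
  have cC: "compact C" unfolding C_def using k(1) finite_imp_compact_convex_hull by blast
  obtain k2 where k2: "finite k2" "C \<subseteq> (\<Union>x\<in>k2. ball x (e/3))"
    using cC[unfolded compact_eq_totally_bounded] e3 by blast
  define A where "A = (\<Union>x\<in> C. \<Union>y \<in> cball 0 (e/3). {x + y})"
  have convA: "convex A" unfolding A_def C_def by (intro convex_sums convex_convex_hull convex_cball)
  have clA: "closed A" unfolding A_def using compact_closed_sums[OF cC closed_cball] by simp
  have SA: "S \<subseteq> A"
  proof
    fix z assume "z \<in> S"
    then have "z \<in> closure S" by (rule closure_subset[THEN subsetD])
    then obtain x where x1: "x \<in> k" and "z \<in> ball x (e/3)" using k(2) by blast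
    then have x: "x \<in> k" "dist x z < e/3" by auto
    have xC: "x \<in> C" unfolding C_def using x(1) by (rule hull_inc)
    have zx: "z - x \<in> cball 0 (e/3)" using x(2) by (simp add: dist_norm norm_minus_commute)
    show "z \<in> A" unfolding A_def by (rule UN_I[OF xC], rule UN_I[OF zx], simp)
  qed
  have "closure (convex hull S) \<subseteq> A"
    using SA convA clA by (intro closure_minimal hull_minimal)
  also have "A \<subseteq> (\<Union>x\<in>k2. ball x e)"
  proof
    fix z assume "z \<in> A"
    then obtain c d where cd: "c \<in> C" "d \<in> cball 0 (e/3)" "z = c + d" unfolding A_def by blast
    then obtain y where y1: "y \<in> k2" and "c \<in> ball y (e/3)" using k2(2) by blast
    then have y: "y \<in> k2" "dist y c < e/3" by auto
    have "dist y z \<le> dist y c + dist c z" by (rule dist_triangle)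
    also have "dist c z = norm d" using cd by (simp add: dist_norm)
    finally have "dist y z < e" using y cd(2) e by simp
    then show "z \<in> (\<Union>x\<in>k2. ball x e)" using y(1) by auto
  qed
  finally show "\<exists>k. finite k \<and> closure (convex hull S) \<subseteq> (\<Union>x\<in>k. ball x e)" using k2(1) by blast
qed

lemma env_sub:
  fixes T :: "'a::real_normed_vector \<Rightarrow> 'a"
  assumes "e > 0"
  shows "cc_envelope T D x \<subseteq> closure (convex hull (T ` (cball x e \<inter> D)))"
  unfolding cc_envelope_def using assms by blast

lemma env_closed:
  fixes T :: "'a::real_normed_vector \<Rightarrow> 'a"
  shows "closed (cc_envelope T D x)"
  unfolding cc_envelope_def by (intro closed_INT) simp

theorem proposition1:
  fixes K U :: "'a::banach set" and T :: "'a \<Rightarrow> 'a"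
  assumes "is_cone K"
    and "openin (top_of_set K) U"
    and "T ` closure U \<subseteq> K"
  shows "((\<forall>B. B \<subseteq> closure U \<and> bounded B \<longrightarrow> rel_compact (T ` B)) \<longrightarrow>
           (\<forall>x\<in>closure U. compact (cc_envelope T (closure U) x))
           \<and> usc_on (closure U) (cc_envelope T (closure U)))
       \<and> (rel_compact (T ` closure U) \<longrightarrow>
           rel_compact (\<Union>x\<in>closure U. cc_envelope T (closure U) x))"
proof (intro conjI impI)
  define D where "D = closure U"
  define C where "C = (\<lambda>x e. closure (convex hull (T ` (cball x e \<inter> D))))"
  have TTC: "cc_envelope T D x = (\<Inter>e\<in>{e::real. e > 0}. C x e)" for x
    unfolding cc_envelope_def C_def by simp
  have Csub: "C x e \<subseteq> C y e'" if "cball x e \<subseteq> cball y e'" for x y e e'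
    unfolding C_def using that by (intro closure_mono hull_mono image_mono Int_mono) auto
  {
    assume H: "rel_compact (T ` closure U)"
    have M: "compact (closure (convex hull (T ` D)))"
      using H unfolding rel_compact_def D_def by (rule mazur)
    have "(\<Union>x\<in>D. cc_envelope T D x) \<subseteq> closure (convex hull (T ` D))"
    proof (rule UN_least)
      fix x assume "x \<in> D"
      have "cc_envelope T D x \<subseteq> C x 1" unfolding C_def by (rule env_sub) simp
      also have "C x 1 \<subseteq> closure (convex hull (T ` D))"
        unfolding C_def by (intro closure_mono hull_mono image_mono) auto
      finally show "cc_envelope T D x \<subseteq> closure (convex hull (T ` D))" .
    qed
    then have "closure (\<Union>x\<in>D. cc_envelope T D x) \<subseteq> closure (convex hull (T ` D))"
      by (intro closure_minimal) auto
    then show "rel_compact (\<Union>x\<in>closure U. cc_envelope T (closure U) x)"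
      unfolding rel_compact_def D_def[symmetric] using M compact_Int_closed[OF M closed_closure]
      by (metis inf.absorb_iff2)
  }
  assume H: "\<forall>B. B \<subseteq> closure U \<and> bounded B \<longrightarrow> rel_compact (T ` B)"
  have Ccomp: "compact (C x e)" for x e
  proof -
    have "rel_compact (T ` (cball x e \<inter> D))"
      using H unfolding D_def by (meson Int_lower2 bounded_Int bounded_cball)
    then show ?thesis unfolding C_def rel_compact_def by (rule mazur)
  qed
  show "\<forall>x\<in>closure U. compact (cc_envelope T (closure U) x)"
  proof
    fix x assume "x \<in> closure U"
    have "cc_envelope T D x = C x 1 \<inter> cc_envelope T D x"
      using env_sub[of 1 T D x] unfolding C_def by auto
    then show "compact (cc_envelope T (closure U) x)"
      using compact_Int_closed[OF Ccomp env_closed] unfolding D_def by metis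
  qed
  show "usc_on (closure U) (cc_envelope T (closure U))"
    unfolding usc_on_def D_def[symmetric]
  proof (intro ballI allI impI)
    fix x V assume xD: "x \<in> D" and V: "open V \<and> cc_envelope T D x \<subseteq> V"
    have "\<exists>e>0. C x e \<subseteq> V"
    proof (rule ccontr)
      assume nE: "\<not> (\<exists>e>0. C x e \<subseteq> V)"
      have "(C x 1 - V) \<inter> (\<Inter>e\<in>{e::real. e > 0}. C x e) \<noteq> {}"
      proof (rule compact_imp_fip_image)
        show "compact (C x 1 - V)" using Ccomp V by (intro compact_diff) auto
        show "closed (C x e)" for e unfolding C_def by simp
        fix I' assume I': "finite I'" "I' \<subseteq> {e::real. e > 0}"
        define m where "m = Min (insert 1 I')"
        have mpos: "m > 0" unfolding m_def using I' by (subst Min_gr_iff) auto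
        have mle: "m \<le> e" if "e \<in> insert 1 I'" for e
          unfolding m_def using I'(1) that by simp
        obtain z where z: "z \<in> C x m" "z \<notin> V" using nE mpos by blast
        have "z \<in> C x e" if "e \<in> insert 1 I'" for e
        proof -
          have "cball x m \<subseteq> cball x e" using mle[OF that] by (auto simp: subset_iff)
          then show ?thesis using Csub[of x m x e] z(1) by blast
        qed
        then show "(C x 1 - V) \<inter> (\<Inter>e\<in>I'. C x e) \<noteq> {}" using z(2) by blast
      qed
      then show False using V unfolding TTC by blast
    qed
    then obtain e where e: "e > 0" "C x e \<subseteq> V" by blast
    show "\<exists>\<delta>>0. \<forall>y\<in>D. dist y x < \<delta> \<longrightarrow> cc_envelope T D y \<subseteq> V"
    proof (intro exI[of _ "e/2"] conjI ballI impI)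
      show "e/2 > 0" using e by simp
      fix y assume "y \<in> D" "dist y x < e/2"
      have "cc_envelope T D y \<subseteq> C y (e/2)" unfolding C_def by (rule env_sub) (use e in simp)
      also have "C y (e/2) \<subseteq> C x e"
      proof (rule Csub, rule subsetI)
        fix w assume "w \<in> cball y (e/2)"
        then have "dist y w \<le> e/2" by simp
        moreover have "dist x w \<le> dist x y + dist y w" by (rule dist_triangle)
        ultimately show "w \<in> cball x e" using \<open>dist y x < e/2\<close> by (simp add: dist_commute)
      qed
      finally show "cc_envelope T D y \<subseteq> V" using e(2) by blast
    qed
  qed
qed

end
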